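(* Let $G$ be a group with generating set $S$ not containing the identity, and let $g,h$ be distinct elements of $G$. Then $d_C(g,h)$ equals the minimum number of distinct colors of arcs occurring in an (undirected) path connecting $g$ and $h$ in the Cayley color digraph of $G$ with respect to $S$.
   Context: The cardinal norm is $\|x\| = \min\{|A| : A\subseteq S,\ x\in\langle A\rangle\}$, where $\langle A\rangle$ is the subgroup generated by $A$, and the cardinal metric is $d_C(g,h)=\|g^{-1}h\|$. The Cayley color digraph of $G$ with respect to $S$ has vertex set $G$, and for each $x\in G$ and $c\in S$ an arc $(x,xc)$ with color $c$ (distinct elements of $S$ are distinct colors). An undirected path from $g$ to $h$ is a sequence $g=x_0,e_1,x_1,\dots,e_n,x_n=h$ of vertices and arcs with $e_i\in\{(x_{i-1},x_i),(x_i,x_{i-1})\}$ for each $i$; its colors are the colors of the arcs $e_i$. *)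

theory Defs
  imports "HOL-Algebra.Algebra"
begin

text \<open>Only finite A need be considered: any element of a generated subgroup
lies in the subgroup generated by a finite subset, so an infinite A is never minimal.\<close>
definition cardinal_norm :: "('a, 'b) monoid_scheme \<Rightarrow> 'a set \<Rightarrow> 'a \<Rightarrow> nat" where
  "cardinal_norm G S x =
     (LEAST n. \<exists>A. A \<subseteq> S \<and> finite A \<and> card A = n \<and> x \<in> generate G A)"

definition cardinal_dist :: "('a, 'b) monoid_scheme \<Rightarrow> 'a set \<Rightarrow> 'a \<Rightarrow> 'a \<Rightarrow> nat" where
  "cardinal_dist G S g h = cardinal_norm G S (inv\<^bsub>G\<^esub> g \<otimes>\<^bsub>G\<^esub> h)"

text \<open>Undirected path in the Cayley color digraph of G w.r.t. S from g to h:
vertex list vs = [x_0,...,x_n], colour list cs = [c_1,...,c_n]; the i-th arc has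
colour c_i and is either (x_{i-1}, x_{i-1} c_i) with x_i = x_{i-1} c_i, or
(x_i, x_i c_i) with x_{i-1} = x_i c_i.\<close>
definition cayley_upath :: "('a, 'b) monoid_scheme \<Rightarrow> 'a set \<Rightarrow> 'a \<Rightarrow> 'a \<Rightarrow> 'a list \<Rightarrow> 'a list \<Rightarrow> bool" where
  "cayley_upath G S g h vs cs \<longleftrightarrow>
     length vs = Suc (length cs) \<and> set vs \<subseteq> carrier G \<and> set cs \<subseteq> S \<and>
     hd vs = g \<and> last vs = h \<and>
     (\<forall>i < length cs. vs ! Suc i = vs ! i \<otimes>\<^bsub>G\<^esub> cs ! i \<or> vs ! i = vs ! Suc i \<otimes>\<^bsub>G\<^esub> cs ! i)"

end

theory Submission
  imports Defs
begin

lemma upath_nil: "x \<in> carrier G \<Longrightarrow> cayley_upath G S x x [x] []"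
  by (simp add: cayley_upath_def)

lemma upath_cons:
  assumes "cayley_upath G S b c vs cs" "a \<in> carrier G" "col \<in> S"
    and "b = a \<otimes>\<^bsub>G\<^esub> col \<or> a = b \<otimes>\<^bsub>G\<^esub> col"
  shows "cayley_upath G S a c (a # vs) (col # cs)"
proof -
  obtain v vs' where vs: "vs = v # vs'" using assms(1) unfolding cayley_upath_def
    by (cases vs) auto
  have hv: "v = b" using assms(1) vs by (simp add: cayley_upath_def)
  show ?thesis using assms vs hv unfolding cayley_upath_def
    by (auto simp: nth_Cons split: nat.splits)
qed

lemma upath_uncons:
  assumes "cayley_upath G S a c (a # v # vs) (col # cs)"
  shows "cayley_upath G S v c (v # vs) cs \<and> a \<in> carrier G \<and> col \<in> S \<and>
         (v = a \<otimes>\<^bsub>G\<^esub> col \<or> a = v \<otimes>\<^bsub>G\<^esub> col)"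
proof -
  have A: "\<forall>i < Suc (length cs). (a # v # vs) ! Suc i = (a # v # vs) ! i \<otimes>\<^bsub>G\<^esub> (col # cs) ! i \<or>
      (a # v # vs) ! i = (a # v # vs) ! Suc i \<otimes>\<^bsub>G\<^esub> (col # cs) ! i"
    using assms by (simp add: cayley_upath_def)
  have B: "\<forall>i < length cs. (v # vs) ! Suc i = (v # vs) ! i \<otimes>\<^bsub>G\<^esub> cs ! i \<or>
      (v # vs) ! i = (v # vs) ! Suc i \<otimes>\<^bsub>G\<^esub> cs ! i"
  proof (intro allI impI)
    fix i assume "i < length cs"
    then show "(v # vs) ! Suc i = (v # vs) ! i \<otimes>\<^bsub>G\<^esub> cs ! i \<or>
      (v # vs) ! i = (v # vs) ! Suc i \<otimes>\<^bsub>G\<^esub> cs ! i" using A[rule_format, of "Suc i"] by simp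
  qed
  show ?thesis using assms A[rule_format, of 0] B unfolding cayley_upath_def by auto
qed

lemma upath_concat:
  "cayley_upath G S a b vs1 cs1 \<Longrightarrow> cayley_upath G S b c vs2 cs2 \<Longrightarrow>
   cayley_upath G S a c (vs1 @ tl vs2) (cs1 @ cs2)"
proof (induction cs1 arbitrary: vs1 a)
  case Nil
  then obtain x where "vs1 = [x]" unfolding cayley_upath_def by (cases vs1) auto
  moreover obtain y vs' where "vs2 = y # vs'" using Nil(2) unfolding cayley_upath_def by (cases vs2) auto
  ultimately show ?case using Nil unfolding cayley_upath_def by auto
next
  case (Cons col cs)
  then obtain v vs' where vs1: "vs1 = a # v # vs'" unfolding cayley_upath_def
    by (cases vs1; cases "tl vs1") auto
  have u: "cayley_upath G S v b (v # vs') cs \<and> a \<in> carrier G \<and> col \<in> S \<and>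
         (v = a \<otimes>\<^bsub>G\<^esub> col \<or> a = v \<otimes>\<^bsub>G\<^esub> col)"
    using upath_uncons Cons(2) vs1 by metis
  have "cayley_upath G S v c ((v # vs') @ tl vs2) (cs @ cs2)" using Cons.IH u Cons(3) by blast
  then show ?case using upath_cons u vs1 by fastforce
qed

lemma upath_generate:
  assumes grp: "group G" and AS: "A \<subseteq> S" and SG: "S \<subseteq> carrier G"
    and y: "y \<in> generate G A"
  shows "\<forall>z\<in>carrier G. \<exists>vs cs. cayley_upath G S z (z \<otimes>\<^bsub>G\<^esub> y) vs cs \<and> set cs \<subseteq> A"
  using y
proof (induction rule: generate.induct)
  case one
  then show ?case using upath_nil grp by (metis empty_subsetI group.is_monoid list.set(1) monoid.r_one)
next
  case (incl h)
  show ?case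
  proof
    fix z assume z: "z \<in> carrier G"
    have hc: "h \<in> carrier G" using incl AS SG by auto
    have "cayley_upath G S (z \<otimes>\<^bsub>G\<^esub> h) (z \<otimes>\<^bsub>G\<^esub> h) [z \<otimes>\<^bsub>G\<^esub> h] []"
      by (rule upath_nil) (simp add: grp z hc group.is_monoid monoid.m_closed)
    then have "cayley_upath G S z (z \<otimes>\<^bsub>G\<^esub> h) [z, z \<otimes>\<^bsub>G\<^esub> h] [h]"
      using upath_cons[of G S "z \<otimes>\<^bsub>G\<^esub> h" _ _ _ z h] z incl AS by auto
    then show "\<exists>vs cs. cayley_upath G S z (z \<otimes>\<^bsub>G\<^esub> h) vs cs \<and> set cs \<subseteq> A"
      using incl by (intro exI[of _ "[z, z \<otimes>\<^bsub>G\<^esub> h]"] exI[of _ "[h]"]) auto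
  qed
next
  case (inv h)
  show ?case
  proof
    fix z assume z: "z \<in> carrier G"
    have hc: "h \<in> carrier G" using inv AS SG by auto
    have wc: "z \<otimes>\<^bsub>G\<^esub> inv\<^bsub>G\<^esub> h \<in> carrier G" using grp z hc by (simp add: group.subgroup_self subgroup.m_closed group.inv_closed)
    have eq: "z = (z \<otimes>\<^bsub>G\<^esub> inv\<^bsub>G\<^esub> h) \<otimes>\<^bsub>G\<^esub> h"
      using grp z hc by (simp add: group.is_monoid monoid.m_assoc group.l_inv monoid.r_one group.inv_closed)
    have "cayley_upath G S (z \<otimes>\<^bsub>G\<^esub> inv\<^bsub>G\<^esub> h) (z \<otimes>\<^bsub>G\<^esub> inv\<^bsub>G\<^esub> h) [z \<otimes>\<^bsub>G\<^esub> inv\<^bsub>G\<^esub> h] []"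
      by (rule upath_nil) (rule wc)
    then have "cayley_upath G S z (z \<otimes>\<^bsub>G\<^esub> inv\<^bsub>G\<^esub> h) [z, z \<otimes>\<^bsub>G\<^esub> inv\<^bsub>G\<^esub> h] [h]"
      using upath_cons[of G S "z \<otimes>\<^bsub>G\<^esub> inv\<^bsub>G\<^esub> h" _ _ _ z h] z inv AS eq by auto
    then show "\<exists>vs cs. cayley_upath G S z (z \<otimes>\<^bsub>G\<^esub> inv\<^bsub>G\<^esub> h) vs cs \<and> set cs \<subseteq> A"
      using inv by (intro exI[of _ "[z, z \<otimes>\<^bsub>G\<^esub> inv\<^bsub>G\<^esub> h]"] exI[of _ "[h]"]) auto
  qed
next
  case (eng h1 h2)
  show ?case
  proof
    fix z assume z: "z \<in> carrier G"
    have AG: "A \<subseteq> carrier G" using AS SG by auto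
    have h1c: "h1 \<in> carrier G" "h2 \<in> carrier G"
      using eng(1,2) group.generate_in_carrier[OF grp AG] by auto
    obtain vs1 cs1 where p1: "cayley_upath G S z (z \<otimes>\<^bsub>G\<^esub> h1) vs1 cs1" "set cs1 \<subseteq> A"
      using eng.IH(1) z by blast
    have zc: "z \<otimes>\<^bsub>G\<^esub> h1 \<in> carrier G" using grp z h1c by (simp add: group.is_monoid monoid.m_closed)
    obtain vs2 cs2 where p2: "cayley_upath G S (z \<otimes>\<^bsub>G\<^esub> h1) ((z \<otimes>\<^bsub>G\<^esub> h1) \<otimes>\<^bsub>G\<^esub> h2) vs2 cs2" "set cs2 \<subseteq> A"
      using eng.IH(2) zc by blast
    have "(z \<otimes>\<^bsub>G\<^esub> h1) \<otimes>\<^bsub>G\<^esub> h2 = z \<otimes>\<^bsub>G\<^esub> (h1 \<otimes>\<^bsub>G\<^esub> h2)"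
      using grp z h1c by (simp add: group.is_monoid monoid.m_assoc)
    then show "\<exists>vs cs. cayley_upath G S z (z \<otimes>\<^bsub>G\<^esub> (h1 \<otimes>\<^bsub>G\<^esub> h2)) vs cs \<and> set cs \<subseteq> A"
      using upath_concat[OF p1(1) p2(1)] p1(2) p2(2) by fastforce
  qed
qed

lemma upath_in_generate:
  assumes grp: "group G" and "cayley_upath G S g h vs cs" and SG: "S \<subseteq> carrier G"
  shows "inv\<^bsub>G\<^esub> g \<otimes>\<^bsub>G\<^esub> h \<in> generate G (set cs)"
  using assms(2)
proof (induction cs arbitrary: vs g)
  case Nil
  then obtain x where "vs = [x]" unfolding cayley_upath_def by (cases vs) auto
  then show ?case using Nil grp unfolding cayley_upath_def
    by (auto simp: group.l_inv generate.one)
next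
  case (Cons col cs)
  then obtain v vs' where vs1: "vs = g # v # vs'" unfolding cayley_upath_def
    by (cases vs; cases "tl vs") auto
  have u: "cayley_upath G S v h (v # vs') cs \<and> g \<in> carrier G \<and> col \<in> S \<and>
         (v = g \<otimes>\<^bsub>G\<^esub> col \<or> g = v \<otimes>\<^bsub>G\<^esub> col)"
    using upath_uncons Cons(2) vs1 by metis
  have IH0: "inv\<^bsub>G\<^esub> v \<otimes>\<^bsub>G\<^esub> h \<in> generate G (set cs)"
    using Cons.IH u by blast
  have IH: "inv\<^bsub>G\<^esub> v \<otimes>\<^bsub>G\<^esub> h \<in> generate G (set (col # cs))"
    using group.mono_generate[OF grp set_subset_Cons] IH0 by blast
  have SG': "set (col # cs) \<subseteq> carrier G" using u Cons(2) SG unfolding cayley_upath_def by auto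
  have hc: "h \<in> carrier G"
  proof -
    have "last vs \<in> set vs" using vs1 by simp
    then show ?thesis using Cons(2) unfolding cayley_upath_def by blast
  qed
  have cc: "col \<in> carrier G" using u SG by auto
  have vc: "v \<in> carrier G" using u unfolding cayley_upath_def by auto
  have ci: "col \<in> generate G (set (col # cs))" by (simp add: generate.incl)
  have ciinv: "inv\<^bsub>G\<^esub> col \<in> generate G (set (col # cs))" by (simp add: generate.inv)
  interpret grp: group G by (rule grp)
  have gc: "g \<in> carrier G" using u by simp
  from u show ?case
  proof (elim conjE disjE)
    assume v: "v = g \<otimes>\<^bsub>G\<^esub> col"
    have "col \<otimes>\<^bsub>G\<^esub> (inv\<^bsub>G\<^esub> v \<otimes>\<^bsub>G\<^esub> h) = col \<otimes>\<^bsub>G\<^esub> ((inv\<^bsub>G\<^esub> col \<otimes>\<^bsub>G\<^esub> inv\<^bsub>G\<^esub> g) \<otimes>\<^bsub>G\<^esub> h)"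
      using v gc cc by (simp add: grp.inv_mult_group)
    also have "\<dots> = (col \<otimes>\<^bsub>G\<^esub> inv\<^bsub>G\<^esub> col) \<otimes>\<^bsub>G\<^esub> (inv\<^bsub>G\<^esub> g \<otimes>\<^bsub>G\<^esub> h)"
      using gc cc hc by (simp add: grp.m_assoc[symmetric])
    also have "\<dots> = inv\<^bsub>G\<^esub> g \<otimes>\<^bsub>G\<^esub> h"
      using gc cc hc by simp
    finally have "inv\<^bsub>G\<^esub> g \<otimes>\<^bsub>G\<^esub> h = col \<otimes>\<^bsub>G\<^esub> (inv\<^bsub>G\<^esub> v \<otimes>\<^bsub>G\<^esub> h)" by simp
    then show ?thesis using generate.eng[OF ci IH] by simp
  next
    assume gv: "g = v \<otimes>\<^bsub>G\<^esub> col"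
    have "inv\<^bsub>G\<^esub> g \<otimes>\<^bsub>G\<^esub> h = (inv\<^bsub>G\<^esub> col \<otimes>\<^bsub>G\<^esub> inv\<^bsub>G\<^esub> v) \<otimes>\<^bsub>G\<^esub> h"
      using gv vc cc by (simp add: grp.inv_mult_group)
    also have "\<dots> = inv\<^bsub>G\<^esub> col \<otimes>\<^bsub>G\<^esub> (inv\<^bsub>G\<^esub> v \<otimes>\<^bsub>G\<^esub> h)"
      using vc cc hc by (simp add: grp.m_assoc)
    finally show ?thesis using generate.eng[OF ciinv IH] by simp
  qed
qed

lemma gen_finite:
  assumes grp: "group G" and y: "y \<in> generate G S"
  shows "\<exists>A\<subseteq>S. finite A \<and> y \<in> generate G A"
  using y
proof (induction rule: generate.induct)
  case one
  then show ?case by (intro exI[of _ "{}"]) (auto intro: generate.one)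
next
  case (incl h)
  then show ?case by (intro exI[of _ "{h}"]) (auto intro: generate.incl)
next
  case (inv h)
  then show ?case by (intro exI[of _ "{h}"]) (auto intro: generate.inv)
next
  case (eng h1 h2)
  then obtain A1 A2 where a: "A1 \<subseteq> S" "finite A1" "h1 \<in> generate G A1"
    "A2 \<subseteq> S" "finite A2" "h2 \<in> generate G A2" by blast
  have "h1 \<in> generate G (A1 \<union> A2)" "h2 \<in> generate G (A1 \<union> A2)"
    using a group.mono_generate[OF grp, of A1 "A1 \<union> A2"] group.mono_generate[OF grp, of A2 "A1 \<union> A2"]
    by auto
  then have "h1 \<otimes>\<^bsub>G\<^esub> h2 \<in> generate G (A1 \<union> A2)" by (rule generate.eng)
  then show ?case using a by (intro exI[of _ "A1 \<union> A2"]) auto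
qed

theorem mainTheorem9:
  fixes G (structure) and S :: "'a set" and g h :: 'a
  assumes "group G" and "S \<subseteq> carrier G" and "generate G S = carrier G"
    and "\<one>\<^bsub>G\<^esub> \<notin> S"
    and "g \<in> carrier G" and "h \<in> carrier G" and "g \<noteq> h"
  shows "(\<exists>vs cs. cayley_upath G S g h vs cs \<and> card (set cs) = cardinal_dist G S g h) \<and>
         (\<forall>vs cs. cayley_upath G S g h vs cs \<longrightarrow> cardinal_dist G S g h \<le> card (set cs))"
proof -
  interpret grp: group G by (rule assms(1))
  define x where "x = inv g \<otimes> h"
  have xc: "x \<in> carrier G" using assms x_def by simp
  have d: "cardinal_dist G S g h = (LEAST n. \<exists>A. A \<subseteq> S \<and> finite A \<and> card A = n \<and> x \<in> generate G A)"
    unfolding cardinal_dist_def cardinal_norm_def x_def by simp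
  have lb: "\<forall>vs cs. cayley_upath G S g h vs cs \<longrightarrow> cardinal_dist G S g h \<le> card (set cs)"
  proof (intro allI impI)
    fix vs cs assume p: "cayley_upath G S g h vs cs"
    have "x \<in> generate G (set cs)" unfolding x_def
      using upath_in_generate[OF assms(1) p assms(2)] .
    moreover have "set cs \<subseteq> S" using p unfolding cayley_upath_def by simp
    ultimately show "cardinal_dist G S g h \<le> card (set cs)" unfolding d
      by (intro Least_le) blast
  qed
  obtain A0 where A0: "A0 \<subseteq> S" "finite A0" "x \<in> generate G A0"
    using gen_finite[OF assms(1), of x S] xc assms(3) by auto
  have "\<exists>A. A \<subseteq> S \<and> finite A \<and> card A = cardinal_dist G S g h \<and> x \<in> generate G A"
    unfolding d by (rule LeastI_ex) (use A0 in blast)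
  then obtain A where A: "A \<subseteq> S" "finite A" "card A = cardinal_dist G S g h" "x \<in> generate G A"
    by blast
  obtain vs cs where p: "cayley_upath G S g (g \<otimes> x) vs cs" "set cs \<subseteq> A"
    using upath_generate[OF assms(1) A(1) assms(2) A(4)] assms(5) by blast
  have gx: "g \<otimes> x = h" unfolding x_def using assms
    by (simp add: grp.m_assoc[symmetric])
  have "card (set cs) \<le> cardinal_dist G S g h" using card_mono[OF A(2) p(2)] A(3) by simp
  moreover have "cardinal_dist G S g h \<le> card (set cs)" using lb p(1) gx by simp
  ultimately show ?thesis using lb p(1) gx by (intro conjI exI[of _ vs] exI[of _ cs]) auto
qed

end
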